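(* Let $G=(g_1,\dots,g_k)\in\mathbb{N}_0^k$ be telescopic with $g_1>0$ and $c(G)=(c_2,\dots,c_k)$. Suppose that for some $n\in\{1,\dots,k\}$, $g_n$ is an $\mathbb{N}_0$-linear combination of the entries $g_i$, $i\ne n$. Then either $g_n\in\langle g_1,\dots,g_{n-1}\rangle$ (interpreted as $\{0\}$ when $n=1$), or $g_n=c_mg_m$ for some $m$ with $n<m\le k$.
   Context: For $G=(g_1,\dots,g_k)\in\mathbb{N}_0^k$, $\langle\cdot\rangle$ denotes the set of $\mathbb{N}_0$-linear combinations. Let $G_i=(g_1,\dots,g_i)$, $d_i=\gcd(G_i)$, and (assuming $g_1>0$) $c(G)=(c_2,\dots,c_k)$ with $c_j=d_{j-1}/d_j$. $G$ is telescopic if $c_jg_j\in\langle G_{j-1}\rangle$ for all $2\le j\le k$. *)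

theory Defs
  imports Main
begin

text \<open>A tuple G = (g_1,...,g_k) is modelled by a function g :: nat => nat
  together with the length k; only the values g 1, ..., g k matter.\<close>

definition lincomb :: "nat set \<Rightarrow> (nat \<Rightarrow> nat) \<Rightarrow> nat set" where
  "lincomb I g = {(\<Sum>i\<in>I. a i * g i) | a. True}"

definition dG :: "(nat \<Rightarrow> nat) \<Rightarrow> nat \<Rightarrow> nat" where
  "dG g i = Gcd (g ` {1..i})"

definition cG :: "(nat \<Rightarrow> nat) \<Rightarrow> nat \<Rightarrow> nat" where
  "cG g j = dG g (j - 1) div dG g j"

definition telescopic :: "(nat \<Rightarrow> nat) \<Rightarrow> nat \<Rightarrow> bool" where
  "telescopic g k \<longleftrightarrow> (\<forall>j\<in>{2..k}. cG g j * g j \<in> lincomb {1..j-1} g)"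

end

theory Submission
  imports Defs
begin

lemma dG_Suc: "dG g (Suc M) = gcd (g (Suc M)) (dG g M)"
proof -
  have "{1..Suc M} = insert (Suc M) {1..M}" by auto
  thus ?thesis unfolding dG_def by simp
qed

lemma dG_pos: assumes "g 1 > 0" "M \<ge> 1" shows "dG g M > 0"
proof -
  have "g 1 \<in> g ` {1..M}" using assms by auto
  hence "dG g M dvd g 1" unfolding dG_def by (rule Gcd_dvd)
  thus ?thesis using assms(1) by (metis dvd_0_left_iff gr0I)
qed

lemma dG_dvd: assumes "i \<in> {1..M}" shows "dG g M dvd g i"
  unfolding dG_def using assms by (simp add: Gcd_dvd)

lemma c_dvd:
  assumes "g 1 > 0" "M \<ge> 1" "dG g M dvd x * g (Suc M)"
  shows "cG g (Suc M) dvd x"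
proof -
  define e where "e = dG g (Suc M)"
  define d where "d = dG g M"
  have e: "e = gcd (g (Suc M)) d" using dG_Suc e_def d_def by simp
  have epos: "e > 0" using dG_pos[of g "Suc M"] assms(1) e_def by simp
  have c: "cG g (Suc M) = d div e" unfolding cG_def e_def d_def by simp
  obtain c' where dc: "d = e * c'" using e by (metis gcd_dvd2 dvdE)
  obtain h where gh: "g (Suc M) = e * h" using e by (metis gcd_dvd1 dvdE)
  have c': "cG g (Suc M) = c'" using c dc epos by simp
  have "e * gcd h c' = e" using e dc gh by (simp add: gcd_mult_distrib_nat)
  hence cop: "coprime h c'" using epos by (simp add: coprime_iff_gcd_eq_1)
  have "e * c' dvd e * (x * h)" using assms(3) dc gh d_def by (simp add: ac_simps)
  hence "c' dvd x * h" using epos by simp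
  hence "c' dvd x" using cop by (metis coprime_commute coprime_dvd_mult_left_iff)
  thus ?thesis using c' by simp
qed

lemma key:
  assumes tel: "telescopic g k" and g1: "g 1 > 0" and n1: "1 \<le> n"
  shows "n \<le> M \<Longrightarrow> M \<le> k \<Longrightarrow> g n = (\<Sum>i\<in>{1..M}-{n}. a i * g i) \<Longrightarrow>
    g n \<in> lincomb {1..n-1} g \<or> (\<exists>m. n < m \<and> m \<le> k \<and> g n = cG g m * g m)"
proof (induction M arbitrary: a)
  case 0
  then show ?case using n1 by simp
next
  case (Suc M)
  show ?case
  proof (cases "Suc M = n")
    case True
    have "{1..Suc M} - {n} = {1..n-1}" using True by auto
    then show ?thesis using Suc.prems(3) unfolding lincomb_def by auto
  next
    case False
    hence nM: "n \<le> M" using Suc.prems by simp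
    have Mk: "M \<le> k" using Suc.prems by simp
    have set: "{1..Suc M} - {n} = insert (Suc M) ({1..M}-{n})" using False by auto
    define S where "S = (\<Sum>i\<in>{1..M}-{n}. a i * g i)"
    have eq: "g n = a (Suc M) * g (Suc M) + S"
      using Suc.prems(3) unfolding set S_def by simp
    show ?thesis
    proof (cases "a (Suc M) * g (Suc M) = 0")
      case True
      hence "g n = S" using eq by simp
      then show ?thesis using Suc.IH[OF nM Mk, of a] S_def by simp
    next
      case nz: False
      define c where "c = cG g (Suc M)"
      have "dG g M dvd g n" using dG_dvd nM n1 by simp
      moreover have "dG g M dvd S" unfolding S_def
        by (rule dvd_sum) (simp add: dG_dvd dvd_mult)
      ultimately have "dG g M dvd a (Suc M) * g (Suc M)" using eq
        by (simp add: dvd_add_left_iff)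
      hence cdvd: "c dvd a (Suc M)" using c_dvd[of g M "a (Suc M)"] g1 nM n1 c_def by simp
      then obtain q where q: "a (Suc M) = c * q" by (auto elim: dvdE)
      have "c \<le> a (Suc M)" using cdvd nz by (simp add: dvd_imp_le)
      hence le1: "c * g (Suc M) \<le> g n" using eq
        by (metis le_add1 mult_le_mono1 order_trans)
      have "Suc M \<in> {2..k}" using nM n1 Suc.prems by auto
      hence "c * g (Suc M) \<in> lincomb {1..M} g" using tel unfolding telescopic_def c_def by (metis diff_Suc_1)
      then obtain b where b: "c * g (Suc M) = (\<Sum>i\<in>{1..M}. b i * g i)"
        unfolding lincomb_def by auto
      show ?thesis
      proof (cases "b n = 0")
        case False
        have "g n \<le> b n * g n" using False by simp
        also have "\<dots> \<le> (\<Sum>i\<in>{1..M}. b i * g i)"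
          by (rule member_le_sum) (use nM n1 in auto)
        finally have "g n = c * g (Suc M)" using b le1 by simp
        then show ?thesis using False nM Suc.prems c_def by (intro disjI2) (rule exI[of _ "Suc M"], auto)
      next
        case True
        have "(\<Sum>i\<in>{1..M}. b i * g i) = b n * g n + (\<Sum>i\<in>{1..M}-{n}. b i * g i)"
          by (rule sum.remove) (use nM n1 in auto)
        hence b2: "c * g (Suc M) = (\<Sum>i\<in>{1..M}-{n}. b i * g i)" using b True by simp
        have "g n = q * (c * g (Suc M)) + S" using eq q by (simp add: ac_simps)
        also have "\<dots> = (\<Sum>i\<in>{1..M}-{n}. (a i + q * b i) * g i)"
          unfolding b2 S_def by (simp add: sum_distrib_left sum.distrib algebra_simps)
        finally show ?thesis by (rule Suc.IH[OF nM Mk])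
      qed
    qed
  qed
qed

theorem mainTheorem4:
  fixes g :: "nat \<Rightarrow> nat" and k n :: nat
  assumes "telescopic g k"
    and "g 1 > 0"
    and "n \<in> {1..k}"
    and "g n \<in> lincomb ({1..k} - {n}) g"
  shows "g n \<in> lincomb {1..n-1} g \<or> (\<exists>m. n < m \<and> m \<le> k \<and> g n = cG g m * g m)"
proof -
  obtain a where "g n = (\<Sum>i\<in>{1..k}-{n}. a i * g i)" using assms(4) unfolding lincomb_def by auto
  thus ?thesis using key[OF assms(1,2), of n k a] assms(3) by auto
qed

end
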